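(* Let $\mathcal X$ be a nonempty set, $n,m,d$ positive integers, and for $i=1,\dots,n$ let $\omega_i>0$, let $\mathbf C_i\in\mathbb H^{d\times d}_{++}$, and let $\mathbf A^{1/2}_i:\mathcal X\to\mathbb C^{m\times d}$ and $\mathbf B_i:\mathcal X\to\mathbb H^{m\times m}_{++}$ be arbitrary functions. Define the matrix ratio $\mathbf M_i(x)=(\mathbf A^{1/2}_i(x))^{H}\mathbf B_i(x)^{-1}\mathbf A^{1/2}_i(x)\in\mathbb C^{d\times d}$ and, for $x\in\mathcal X$ and $\mathbf Y_1,\dots,\mathbf Y_n\in\mathbb C^{m\times d}$, $$f_q(x,\mathbf Y_1,\dots,\mathbf Y_n)=\sum_{i=1}^n\omega_i\,\mathrm{tr}\Big(2\Re\{(\mathbf A^{1/2}_i(x))^{H}\mathbf Y_i\mathbf C_i\}-\mathbf Y_i^{H}\mathbf B_i(x)\mathbf Y_i\mathbf C_i\Big).$$ Then for every fixed $x\in\mathcal X$, $\max_{\mathbf Y_1,\dots,\mathbf Y_n\in\mathbb C^{m\times d}} f_q(x,\mathbf Y_1,\dots,\mathbf Y_n)=\sum_{i=1}^n\omega_i\,\mathrm{tr}(\mathbf C_i\mathbf M_i(x))$, the maximum being attained uniquely at $\mathbf Y_i=\mathbf B_i(x)^{-1}\mathbf A^{1/2}_i(x)$, $i=1,\dots,n$. Consequently, the problem $\max_{x\in\mathcal X}\sum_{i=1}^n\omega_i\mathrm{tr}(\mathbf C_i\mathbf M_i(x))$ is equivalent to $\max_{x\in\mathcal X,\ \mathbf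 Y_i\in\mathbb C^{m\times d}} f_q(x,\mathbf Y_1,\dots,\mathbf Y_n)$: both have the same optimal value, and $x^\star$ is optimal for the former if and only if $(x^\star,\mathbf B_1(x^\star)^{-1}\mathbf A^{1/2}_1(x^\star),\dots,\mathbf B_n(x^\star)^{-1}\mathbf A^{1/2}_n(x^\star))$ is optimal for the latter.
   Context: $\mathbb H^{k\times k}_{++}$ denotes the set of $k\times k$ Hermitian positive definite matrices; $(\cdot)^H$ is conjugate transpose; $\Re$ is the real part applied entrywise (so $\mathrm{tr}(2\Re\{\mathbf A\})=2\Re\,\mathrm{tr}(\mathbf A)$). *)

theory Defs
  imports "HOL-Analysis.Analysis"
begin

text \<open>Complex matrices are rendered with type-indexed dimensions:
  a complex m x d matrix is of type complex^'d^'m (rows indexed by 'm).\<close>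

definition cadj :: "complex^'c^'r \<Rightarrow> complex^'r^'c" where
  "cadj A = (\<chi> i j. cnj (A $ j $ i))"

definition mRe :: "complex^'c^'r \<Rightarrow> complex^'c^'r" where
  "mRe A = (\<chi> i j. complex_of_real (Re (A $ i $ j)))"

definition hermitian :: "complex^'n^'n \<Rightarrow> bool" where
  "hermitian B \<longleftrightarrow> cadj B = B"

definition hpd :: "complex^'n^'n \<Rightarrow> bool" where
  "hpd B \<longleftrightarrow> hermitian B \<and>
     (\<forall>v::complex^'n. v \<noteq> 0 \<longrightarrow> 0 < Re (\<Sum>i\<in>UNIV. cnj (v $ i) * (B *v v) $ i))"

definition mratio :: "complex^'d^'m \<Rightarrow> complex^'m^'m \<Rightarrow> complex^'d^'d" where
  "mratio A B = cadj A ** matrix_inv B ** A"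

text \<open>The quadratic-transform objective f_q.  Each summand trace is real for
  Hermitian B_i, C_i; we take the real part of the whole sum so that f_q is real valued.\<close>
definition fq :: "('n::finite \<Rightarrow> real) \<Rightarrow> ('n \<Rightarrow> complex^'d^'d)
    \<Rightarrow> ('x \<Rightarrow> 'n \<Rightarrow> complex^'d^'m) \<Rightarrow> ('x \<Rightarrow> 'n \<Rightarrow> complex^'m^'m)
    \<Rightarrow> 'x \<Rightarrow> ('n \<Rightarrow> complex^'d^'m) \<Rightarrow> real" where
  "fq \<omega> C A B x Y = Re (\<Sum>i\<in>UNIV. complex_of_real (\<omega> i) *
      trace (2 *\<^sub>R mRe (cadj (A x i) ** Y i ** C i) - cadj (Y i) ** B x i ** Y i ** C i))"

definition gobj :: "('n::finite \<Rightarrow> real) \<Rightarrow> ('n \<Rightarrow> complex^'d^'d)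
    \<Rightarrow> ('x \<Rightarrow> 'n \<Rightarrow> complex^'d^'m) \<Rightarrow> ('x \<Rightarrow> 'n \<Rightarrow> complex^'m^'m)
    \<Rightarrow> 'x \<Rightarrow> complex" where
  "gobj \<omega> C A B x = (\<Sum>i\<in>UNIV. complex_of_real (\<omega> i) * trace (C i ** mratio (A x i) (B x i)))"

end

theory Submission
  imports Defs
begin


lemma cadj_cadj[simp]: "cadj (cadj A) = A"
  by (simp add: cadj_def vec_eq_iff)

lemma cadj_mult: "cadj ((X::complex^'b^'a) ** (Y::complex^'c^'b)) = cadj Y ** cadj X"
  by (simp add: cadj_def vec_eq_iff matrix_matrix_mult_def mult.commute)

lemma cadj_add: "cadj (X + Y) = cadj X + cadj Y"
  by (simp add: cadj_def vec_eq_iff)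

lemma cadj_diff: "cadj (X - Y) = cadj X - cadj Y"
  by (simp add: cadj_def vec_eq_iff)

lemma cadj_mat1: "cadj (mat 1 :: complex^'n^'n) = mat 1"
  by (simp add: cadj_def vec_eq_iff mat_def)

lemma trace_cadj: "trace (cadj M) = cnj (trace M)"
  by (simp add: cadj_def trace_def)

lemma trace_mRe: "trace (mRe M) = complex_of_real (Re (trace M))"
  by (simp add: mRe_def trace_def Re_sum)

lemma trace_scaleR: "trace (c *\<^sub>R (M::complex^'n^'n)) = complex_of_real c * trace M"
  unfolding trace_def by (simp add: sum_distrib_left) (simp add: scaleR_conv_of_real)



definition qf :: "complex^'n^'n \<Rightarrow> complex^'n \<Rightarrow> complex" where
  "qf B v = (\<Sum>i\<in>UNIV. cnj (v $ i) * (B *v v) $ i)"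

definition psd :: "complex^'n^'n \<Rightarrow> bool" where
  "psd B \<longleftrightarrow> hermitian B \<and> (\<forall>v. 0 \<le> Re (qf B v))"

definition outer :: "complex^'n \<Rightarrow> complex^'n^'n" where
  "outer v = (\<chi> i j. v $ i * cnj (v $ j))"

lemma herm_entry: "hermitian B \<Longrightarrow> B $ j $ i = cnj (B $ i $ j)"
  unfolding hermitian_def cadj_def by (metis complex_cnj_cnj vec_lambda_beta)

lemma qf_expand:
  assumes "hermitian B"
  shows "qf B (v + t *s axis k 1) = qf B v + cnj t * (B *v v) $ k + t * cnj ((B *v v) $ k)
          + cnj t * t * B $ k $ k"
proof -
  have h: "\<And>i. B $ i $ k = cnj (B $ k $ i)" using herm_entry[OF assms] by blast
  have Bv: "\<And>i. (B *v (v + t *s axis k 1)) $ i = (B *v v) $ i + B $ i $ k * t"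
  proof -
    fix i
    have "(\<Sum>j\<in>UNIV. B $ i $ j * (v + t *s axis k 1) $ j) = (\<Sum>j\<in>UNIV. B $ i $ j * v $ j + (if j = k then B $ i $ k * t else 0))"
      by (rule sum.cong) (auto simp: axis_def algebra_simps)
    also have "\<dots> = (\<Sum>j\<in>UNIV. B $ i $ j * v $ j) + B $ i $ k * t"
      by (simp add: sum.distrib)
    finally show "(B *v (v + t *s axis k 1)) $ i = (B *v v) $ i + B $ i $ k * t"
      by (simp add: matrix_vector_mult_def)
  qed
  have s1: "(\<Sum>i\<in>UNIV. cnj (v $ i) * (B $ i $ k * t)) = t * cnj ((B *v v) $ k)"
    by (simp add: h matrix_vector_mult_def sum_distrib_left algebra_simps)
  have "qf B (v + t *s axis k 1) = (\<Sum>i\<in>UNIV. (cnj (v $ i) + (if i = k then cnj t else 0)) * ((B *v v) $ i + B $ i $ k * t))"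
    unfolding qf_def Bv by (rule sum.cong) (auto simp: axis_def)
  also have "\<dots> = qf B v + (\<Sum>i\<in>UNIV. cnj (v $ i) * (B $ i $ k * t)) + cnj t * ((B *v v) $ k + B $ k $ k * t)"
  proof -
    have "(\<Sum>i\<in>UNIV. (cnj (v $ i) + (if i = k then cnj t else 0)) * ((B *v v) $ i + B $ i $ k * t))
      = (\<Sum>i\<in>UNIV. cnj (v $ i) * (B *v v) $ i + cnj (v $ i) * (B $ i $ k * t) + (if i = k then cnj t * ((B *v v) $ k + B $ k $ k * t) else 0))"
      by (rule sum.cong) (auto simp: algebra_simps)
    then show ?thesis by (simp add: sum.distrib qf_def)
  qed
  finally show ?thesis using s1 by (simp add: algebra_simps)
qed



lemma mult_delta1: "(x::complex) * (if P then 1 else 0) = (if P then x else 0)" by simp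
lemma mult_delta2: "(if P then 1 else 0) * (x::complex) = (if P then x else 0)" by simp



lemma Bv_axis: "((B::complex^'n^'n) *v axis j 1) $ k = B $ k $ j"
  by (simp add: axis_def matrix_vector_mult_def mult_delta1)

lemma qf_axis: "qf B (axis k 1) = B $ k $ k"
proof -
  have "qf B (axis k 1) = (\<Sum>i\<in>UNIV. if i = k then B $ k $ k else 0)"
    unfolding qf_def by (rule sum.cong) (auto simp: Bv_axis, simp add: axis_def)
  then show ?thesis by simp
qed

lemma qf_diff: "qf (B - M) v = qf B v - qf M v"
  by (simp add: qf_def matrix_vector_mult_def sum_subtractf algebra_simps sum.distrib[symmetric] right_diff_distrib)

lemma qf_outer: "qf (outer b) v = cnj c * c" if "c = (\<Sum>j\<in>UNIV. cnj (b $ j) * v $ j)"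
proof -
  have "qf (outer b) v = (\<Sum>i\<in>UNIV. cnj (v $ i) * b $ i * c)"
    unfolding qf_def that by (simp add: outer_def matrix_vector_mult_def sum_distrib_left mult.assoc mult.left_commute)
  also have "\<dots> = cnj c * c" unfolding that by (simp add: sum_distrib_right mult.commute)
  finally show ?thesis .
qed

lemma herm_diag_real: "hermitian B \<Longrightarrow> B $ k $ k = complex_of_real (Re (B $ k $ k))"
  using herm_entry[of B k k] by (metis Reals_cnj_iff complex_is_Real_iff of_real_Re)

lemma cadj_outer: "cadj (outer b) = outer b"
  by (simp add: cadj_def outer_def vec_eq_iff)



lemma psd_zero_diag:
  assumes "psd B" "B $ k $ k = 0"
  shows "B $ k $ j = 0"
proof (rule ccontr)
  assume nz: "B $ k $ j \<noteq> 0"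
  have herm: "hermitian B" using assms(1) psd_def by blast
  define q where "q = Re (qf B (axis j 1))"
  define a where "a = cmod (B $ k $ j) ^ 2"
  have apos: "a > 0" using nz by (simp add: a_def)
  define s where "s = (\<bar>q\<bar> + 1) / (2 * a)"
  define t where "t = - complex_of_real s * B $ k $ j"
  have "0 \<le> Re (qf B (axis j 1 + t *s axis k 1))" using assms(1) psd_def by blast
  also have "qf B (axis j 1 + t *s axis k 1) = qf B (axis j 1) - 2 * complex_of_real s * (cnj (B $ k $ j) * B $ k $ j)"
    unfolding qf_expand[OF herm] Bv_axis assms(2) t_def by (simp add: algebra_simps)
  also have "cnj (B $ k $ j) * B $ k $ j = complex_of_real a"
    unfolding a_def by (metis complex_norm_square mult.commute of_real_power)
  finally have "0 \<le> q - 2 * s * a" by (simp add: q_def)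
  moreover have "2 * s * a = \<bar>q\<bar> + 1" using apos by (simp add: s_def)
  ultimately show False by linarith
qed

lemma psd_decomp:
  fixes B :: "complex^'n^'n"
  assumes "finite S"
  shows "psd B \<Longrightarrow> (\<forall>i j. i \<notin> S \<or> j \<notin> S \<longrightarrow> B $ i $ j = 0) \<Longrightarrow>
    \<exists>b. (\<forall>r. r \<notin> S \<longrightarrow> b r = 0) \<and> B = (\<Sum>r\<in>UNIV. outer (b r))"
  using assms
proof (induction S arbitrary: B rule: finite_induct)
  case empty
  then have "B = 0" by (simp add: vec_eq_iff)
  then show ?case by (intro exI[of _ "\<lambda>_. 0"]) (simp add: outer_def vec_eq_iff zero_vec_def)
next
  case (insert k S)
  have herm: "hermitian B" using insert.prems(1) psd_def by blast
  define \<beta> where "\<beta> = Re (B $ k $ k)"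
  have Bkk: "B $ k $ k = complex_of_real \<beta>" using herm_diag_real[OF herm] \<beta>_def by simp
  have bge: "\<beta> \<ge> 0" using insert.prems(1) qf_axis[of B k] unfolding psd_def \<beta>_def by metis
  show ?case
  proof (cases "\<beta> = 0")
    case True
    have row: "B $ k $ j = 0" for j using psd_zero_diag[OF insert.prems(1)] Bkk True by simp
    have col: "B $ j $ k = 0" for j using herm_entry[OF herm, of k j] row by simp
    have "\<forall>i j. i \<notin> S \<or> j \<notin> S \<longrightarrow> B $ i $ j = 0"
    proof (intro allI impI)
      fix i j assume "i \<notin> S \<or> j \<notin> S"
      then show "B $ i $ j = 0" using insert.prems(2) row col by (cases "i = k"; cases "j = k") auto
    qed
    from insert.IH[OF insert.prems(1) this] obtain b where
      "\<forall>r. r \<notin> S \<longrightarrow> b r = 0" "B = (\<Sum>r\<in>UNIV. outer (b r))" by blast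
    then show ?thesis by (intro exI[of _ b]) auto
  next
    case False
    then have bpos: "\<beta> > 0" using bge by simp
    define bk where "bk = (\<chi> i. B $ i $ k / complex_of_real (sqrt \<beta>))"
    define B' where "B' = B - outer bk"
    have sq: "complex_of_real (sqrt \<beta>) * complex_of_real (sqrt \<beta>) = complex_of_real \<beta>"
      using bge by (simp flip: of_real_mult)
    have sqnz: "complex_of_real (sqrt \<beta>) \<noteq> 0" using bpos by simp
    have outer_ent: "outer bk $ i $ j = B $ i $ k * B $ k $ j / complex_of_real \<beta>" for i j
    proof -
      have "outer bk $ i $ j = B $ i $ k * cnj (B $ j $ k) / (complex_of_real (sqrt \<beta>) * complex_of_real (sqrt \<beta>))"
        by (simp add: outer_def bk_def)
      then show ?thesis using herm_entry[OF herm, of k j] sq by simp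
    qed
    have bnz: "complex_of_real \<beta> \<noteq> 0" using bpos by simp
    have supp: "\<forall>i j. i \<notin> S \<or> j \<notin> S \<longrightarrow> B' $ i $ j = 0"
    proof (intro allI impI)
      fix i j assume ij: "i \<notin> S \<or> j \<notin> S"
      show "B' $ i $ j = 0"
      proof (cases "i = k \<or> j = k")
        case True
        then show ?thesis using bnz unfolding B'_def by (auto simp: outer_ent Bkk)
      next
        case False
        then have "B $ i $ j = 0" "B $ i $ k = 0 \<or> B $ k $ j = 0"
          using ij insert.prems(2) by auto
        then show ?thesis unfolding B'_def by (auto simp: outer_ent)
      qed
    qed
    have hB': "hermitian B'" using herm unfolding B'_def hermitian_def by (simp add: cadj_diff cadj_outer)
    have qfB': "0 \<le> Re (qf B' v)" for v
    proof -
      define c where "c = (B *v v) $ k"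
      define t where "t = - c / complex_of_real \<beta>"
      have c2: "(\<Sum>j\<in>UNIV. cnj (bk $ j) * v $ j) = c / complex_of_real (sqrt \<beta>)"
        unfolding bk_def c_def matrix_vector_mult_def
        by (simp add: herm_entry[OF herm, of k] sum_divide_distrib)
      have "qf B' v = qf B v - cnj c * c / complex_of_real \<beta>"
        unfolding B'_def qf_diff qf_outer[OF c2[symmetric]] using sq by (simp add: field_simps)
      also have "\<dots> = qf B (v + t *s axis k 1)"
        unfolding qf_expand[OF herm] c_def[symmetric] t_def Bkk using bnz
        by (simp add: field_simps)
      finally show ?thesis using insert.prems(1) psd_def by metis
    qed
    have "psd B'" using hB' qfB' psd_def by blast
    from insert.IH[OF this supp] obtain b where
      b: "\<forall>r. r \<notin> S \<longrightarrow> b r = 0" "B' = (\<Sum>r\<in>UNIV. outer (b r))" by blast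
    define b2 where "b2 = b(k := bk)"
    have "(\<Sum>r\<in>UNIV. outer (b2 r)) = outer bk + (\<Sum>r\<in>UNIV - {k}. outer (b r))"
      by (simp add: b2_def sum.remove[of UNIV k])
    also have "(\<Sum>r\<in>UNIV - {k}. outer (b r)) = (\<Sum>r\<in>UNIV. outer (b r))"
      by (simp add: sum.remove[of UNIV k] b(1) insert.hyps(2) outer_def zero_vec_def)
    also have "outer bk + \<dots> = B" using b(2) B'_def by (metis add.commute diff_add_cancel)
    finally show ?thesis using b(1) by (intro exI[of _ b2]) (auto simp: b2_def)
  qed
qed



lemma mm_add_r: "((A::'a::comm_ring_1^'n^'m) + B) ** C = A ** C + B ** C"
  by (simp add: matrix_matrix_mult_def vec_eq_iff sum.distrib distrib_right)
lemma mm_diff_r: "((A::'a::comm_ring_1^'n^'m) - B) ** C = A ** C - B ** C"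
  by (simp add: matrix_matrix_mult_def vec_eq_iff sum_subtractf left_diff_distrib)
lemma mm_diff_l: "(A::'a::comm_ring_1^'n^'m) ** (B - C) = A ** B - A ** C"
  by (simp add: matrix_matrix_mult_def vec_eq_iff sum_subtractf right_diff_distrib)
lemma qf_add: "qf (A + B) v = qf A v + qf B v"
  by (simp add: qf_def matrix_vector_mult_add_rdistrib distrib_left sum.distrib)

lemma outer_conj: "cadj Z ** outer b ** Z = outer (cadj Z *v b)"
proof -
  have "(cadj Z ** outer b ** Z) $ i $ j = outer (cadj Z *v b) $ i $ j" for i j
  proof -
    have "(cadj Z ** outer b ** Z) $ i $ j = (\<Sum>c\<in>UNIV. (\<Sum>a\<in>UNIV. cnj (Z $ a $ i) * (b $ a * cnj (b $ c))) * Z $ c $ j)"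
      by (simp add: matrix_matrix_mult_def cadj_def outer_def)
    also have "\<dots> = (\<Sum>c\<in>UNIV. \<Sum>a\<in>UNIV. cnj (Z $ a $ i) * b $ a * (cnj (b $ c) * Z $ c $ j))"
      by (rule sum.cong[OF refl]) (simp add: sum_distrib_right sum_distrib_left mult_ac)
    also have "\<dots> = (\<Sum>a\<in>UNIV. \<Sum>c\<in>UNIV. cnj (Z $ a $ i) * b $ a * (cnj (b $ c) * Z $ c $ j))"
      by (rule sum.swap)
    also have "\<dots> = (\<Sum>a\<in>UNIV. cnj (Z $ a $ i) * b $ a) * (\<Sum>c\<in>UNIV. cnj (b $ c) * Z $ c $ j)"
      by (simp add: sum_product)
    also have "\<dots> = outer (cadj Z *v b) $ i $ j"
      by (simp add: outer_def matrix_vector_mult_def cadj_def mult.commute)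
    finally show ?thesis .
  qed
  then show ?thesis by (simp add: vec_eq_iff)
qed

lemma trace_outer: "trace (outer w ** C) = qf C w"
proof -
  have "trace (outer w ** C) = (\<Sum>i\<in>UNIV. \<Sum>k\<in>UNIV. w $ i * cnj (w $ k) * C $ k $ i)"
    by (simp add: trace_def matrix_matrix_mult_def outer_def)
  also have "\<dots> = (\<Sum>k\<in>UNIV. \<Sum>i\<in>UNIV. cnj (w $ k) * (C $ k $ i * w $ i))"
    by (subst sum.swap) (simp add: mult_ac)
  also have "\<dots> = qf C w"
    by (simp add: qf_def matrix_vector_mult_def sum_distrib_left)
  finally show ?thesis .
qed

lemma trace_sum_lin:
  fixes M :: "'r \<Rightarrow> complex^'m^'m" and Z :: "complex^'d^'m"
  assumes "finite R"
  shows "trace (cadj Z ** (\<Sum>r\<in>R. M r) ** Z ** C) = (\<Sum>r\<in>R. trace (cadj Z ** M r ** Z ** C))"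
  using assms
proof (induction R rule: finite_induct)
  case empty then show ?case by (simp add: trace_def)
next
  case (insert x F)
  then show ?case by (simp add: matrix_add_ldistrib mm_add_r trace_add)
qed

lemma qf_sum: "finite R \<Longrightarrow> qf (\<Sum>r\<in>R. M r) v = (\<Sum>r\<in>R. qf (M r) v)"
  by (induction R rule: finite_induct) (simp_all add: qf_add, simp add: qf_def)



lemma qf_zero[simp]: "qf B 0 = 0" by (simp add: qf_def)

lemma hpd_qf: "hpd B \<Longrightarrow> v \<noteq> 0 \<Longrightarrow> 0 < Re (qf B v)"
  unfolding hpd_def qf_def by blast

lemma hpd_qf_ge: "hpd B \<Longrightarrow> 0 \<le> Re (qf B v)"
  using hpd_qf[of B v] by (cases "v = 0") auto

lemma hpd_herm: "hpd B \<Longrightarrow> hermitian B" unfolding hpd_def by blast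

lemma hpd_psd: "hpd B \<Longrightarrow> psd B"
  unfolding psd_def using hpd_qf_ge hpd_herm by blast

lemma hpd_decomp:
  fixes B :: "complex^'m^'m"
  assumes "hpd B" obtains b :: "'m \<Rightarrow> complex^'m" where "B = (\<Sum>r\<in>UNIV. outer (b r))"
proof -
  have "\<exists>b :: 'm \<Rightarrow> complex^'m. (\<forall>r. r \<notin> UNIV \<longrightarrow> b r = 0) \<and> B = (\<Sum>r\<in>UNIV. outer (b r))"
    by (rule psd_decomp[OF finite hpd_psd[OF assms]]) simp
  then show thesis using that by blast
qed

lemma tr_formula:
  fixes b :: "'r::finite \<Rightarrow> complex^'m"
  assumes "B = (\<Sum>r\<in>UNIV. outer (b r))"
  shows "trace (cadj Z ** B ** Z ** C) = (\<Sum>r\<in>UNIV. qf C (cadj Z *v b r))"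
  by (simp only: assms trace_sum_lin[OF finite] outer_conj trace_outer)

lemma tr_nonneg:
  fixes B :: "complex^'m^'m" and C :: "complex^'d^'d" and Z :: "complex^'d^'m"
  assumes "hpd B" "hpd C"
  shows "0 \<le> Re (trace (cadj Z ** B ** Z ** C))"
proof -
  obtain b :: "'m \<Rightarrow> complex^'m" where b: "B = (\<Sum>r\<in>UNIV. outer (b r))" using hpd_decomp[OF assms(1)] by blast
  show ?thesis unfolding tr_formula[OF b] Re_sum
    by (rule sum_nonneg) (rule hpd_qf_ge[OF assms(2)])
qed

lemma tr_pos:
  fixes B :: "complex^'m^'m" and C :: "complex^'d^'d" and Z :: "complex^'d^'m"
  assumes "hpd B" "hpd C" "Z \<noteq> 0"
  shows "0 < Re (trace (cadj Z ** B ** Z ** C))"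
proof -
  obtain b :: "'m \<Rightarrow> complex^'m" where b: "B = (\<Sum>r\<in>UNIV. outer (b r))" using hpd_decomp[OF assms(1)] by blast
  have "\<exists>a j. Z $ a $ j \<noteq> 0" using assms(3) by (auto simp: vec_eq_iff)
  then obtain a j where aj: "Z $ a $ j \<noteq> 0" by blast
  define z where "z = (\<chi> a. Z $ a $ j)"
  have znz: "z \<noteq> 0" using aj by (auto simp: z_def vec_eq_iff)
  have "\<exists>r. cadj Z *v b r \<noteq> 0"
  proof (rule ccontr)
    assume "\<not> ?thesis"
    then have w0: "\<And>r. cadj Z *v b r = 0" by blast
    have "qf B z = (\<Sum>r\<in>UNIV. qf (outer (b r)) z)" unfolding b by (rule qf_sum) simp
    also have "\<dots> = (\<Sum>r\<in>UNIV. cnj (cnj ((cadj Z *v b r) $ j)) * cnj ((cadj Z *v b r) $ j))"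
    proof (rule sum.cong[OF refl], rule qf_outer)
      fix r show "cnj ((cadj Z *v b r) $ j) = (\<Sum>i\<in>UNIV. cnj (b r $ i) * z $ i)"
        by (simp add: matrix_vector_mult_def cadj_def z_def mult.commute)
    qed
    also have "\<dots> = 0" by (simp add: w0)
    finally show False using hpd_qf[OF assms(1) znz] by simp
  qed
  then obtain r where r: "cadj Z *v b r \<noteq> 0" by blast
  show ?thesis unfolding tr_formula[OF b] Re_sum
  proof (rule sum_pos2[of UNIV r])
    show "0 < Re (qf C (cadj Z *v b r))" using hpd_qf[OF assms(2) r] .
  qed (auto intro: hpd_qf_ge[OF assms(2)])
qed



lemma hpd_inv:
  fixes B :: "complex^'m^'m"
  assumes "hpd B"
  shows "B ** matrix_inv B = mat 1" "matrix_inv B ** B = mat 1"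
proof -
  have "\<forall>x. B *v x = 0 \<longrightarrow> x = 0"
  proof (intro allI impI)
    fix x assume "B *v x = 0"
    then have "qf B x = 0" by (simp add: qf_def)
    then show "x = 0" using hpd_qf[OF assms, of x] by (cases "x = 0") auto
  qed
  then have "\<exists>B'. B' ** B = mat 1" using matrix_left_invertible_ker by blast
  then have "invertible B" using invertible_left_inverse by blast
  then have "\<exists>B'. B ** B' = mat 1 \<and> B' ** B = mat 1" unfolding invertible_def .
  then have "B ** matrix_inv B = mat 1 \<and> matrix_inv B ** B = mat 1"
    unfolding matrix_inv_def by (rule someI_ex)
  then show "B ** matrix_inv B = mat 1" "matrix_inv B ** B = mat 1" by auto
qed

lemma herm_inv:
  fixes B :: "complex^'m^'m"
  assumes "hpd B"
  shows "cadj (matrix_inv B) = matrix_inv B"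
proof -
  have h: "cadj B = B" using hpd_herm[OF assms] hermitian_def by blast
  have "cadj (matrix_inv B ** B) = mat 1" using hpd_inv(2)[OF assms] cadj_mat1 by simp
  then have "B ** cadj (matrix_inv B) = mat 1" by (simp add: cadj_mult h)
  then have "matrix_inv B ** (B ** cadj (matrix_inv B)) = matrix_inv B" by simp
  then show ?thesis by (simp add: matrix_mul_assoc hpd_inv(2)[OF assms])
qed

definition G :: "complex^'m^'m \<Rightarrow> complex^'d^'d \<Rightarrow> complex^'d^'m \<Rightarrow> complex^'d^'m \<Rightarrow> complex" where
  "G B C U V = trace (cadj U ** B ** V ** C)"

lemma G_addL: "G B C (U + V) W = G B C U W + G B C V W"
  by (simp add: G_def cadj_add mm_add_r trace_add)

lemma G_addR: "G B C U (V + W) = G B C U V + G B C U W"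
  by (simp add: G_def matrix_add_ldistrib mm_add_r trace_add)

lemma G_conj:
  assumes "hermitian B" "hermitian C"
  shows "G B C V U = cnj (G B C U V)"
proof -
  have hB: "cadj B = B" and hC: "cadj C = C" using assms hermitian_def by blast+
  have "cnj (G B C U V) = trace (C ** (cadj V ** B ** U))"
    unfolding G_def trace_cadj[symmetric] by (simp add: cadj_mult hB hC matrix_mul_assoc)
  also have "\<dots> = G B C V U" unfolding G_def by (rule trace_mul_sym)
  finally show ?thesis by simp
qed

lemma perI:
  fixes B :: "complex^'m^'m" and C :: "complex^'d^'d" and A Y :: "complex^'d^'m"
  assumes hB: "hpd B" and hC: "hpd C"
  shows "Im (trace (C ** mratio A B)) = 0"
    and "Re (trace (2 *\<^sub>R mRe (cadj A ** Y ** C) - cadj Y ** B ** Y ** C))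
         = Re (trace (C ** mratio A B)) - Re (G B C (Y - matrix_inv B ** A) (Y - matrix_inv B ** A))"
proof -
  define Y0 where "Y0 = matrix_inv B ** A"
  define Z where "Z = Y - Y0"
  have hb: "hermitian B" "hermitian C" using hB hC hpd_herm by blast+
  have cB: "cadj B = B" using hb hermitian_def by blast
  have AY0: "cadj A = cadj Y0 ** B"
  proof -
    have "B ** Y0 = A" unfolding Y0_def by (simp add: matrix_mul_assoc hpd_inv(1)[OF hB])
    then show ?thesis by (metis cadj_mult cB)
  qed
  have m: "mratio A B = cadj Y0 ** B ** Y0"
      unfolding mratio_def Y0_def cadj_mult herm_inv[OF hB]
      by (simp add: matrix_mul_assoc[symmetric] hpd_inv(2)[OF hB])
  have tr1: "trace (C ** mratio A B) = G B C Y0 Y0"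
    unfolding G_def using trace_mul_sym[of C "mratio A B"] m by simp
  have e: "G B C Y0 Y0 = cnj (G B C Y0 Y0)" using G_conj[OF hb, of Y0 Y0] .
  have "Im (G B C Y0 Y0) = Im (cnj (G B C Y0 Y0))" using e by (rule arg_cong)
  then have real0: "Im (G B C Y0 Y0) = 0" by simp
  then show "Im (trace (C ** mratio A B)) = 0" using tr1 by simp
  have trA: "trace (cadj A ** Y ** C) = G B C Y0 Y" unfolding G_def AY0 ..
  have Y: "Y = Y0 + Z" unfolding Z_def by simp
  have GZ: "Re (G B C Z Y0) = Re (G B C Y0 Z)" using G_conj[OF hb, of Y0 Z] by simp
  have "Re (trace (2 *\<^sub>R mRe (cadj A ** Y ** C) - cadj Y ** B ** Y ** C))
        = 2 * Re (G B C Y0 Y) - Re (G B C Y Y)"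
    by (simp add: trace_sub trace_scaleR trace_mRe trA G_def[symmetric])
  also have "\<dots> = Re (G B C Y0 Y0) - Re (G B C Z Z)"
    unfolding Y G_addL G_addR using GZ by simp
  finally show "Re (trace (2 *\<^sub>R mRe (cadj A ** Y ** C) - cadj Y ** B ** Y ** C))
         = Re (trace (C ** mratio A B)) - Re (G B C (Y - matrix_inv B ** A) (Y - matrix_inv B ** A))"
    using tr1 Z_def Y0_def by simp
qed



lemma cadj_zero[simp]: "cadj 0 = 0" by (simp add: cadj_def vec_eq_iff)

lemma G_zero[simp]: "G B C 0 0 = 0" by (simp add: G_def trace_def)

theorem proposition2:
  fixes \<omega> :: "'n::finite \<Rightarrow> real"
    and C :: "'n \<Rightarrow> complex^'d::finite^'d"
    and A :: "'x \<Rightarrow> 'n \<Rightarrow> complex^'d^'m::finite"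
    and B :: "'x \<Rightarrow> 'n \<Rightarrow> complex^'m^'m"
    and X :: "'x set"
  assumes "X \<noteq> {}"
    and "\<And>i. \<omega> i > 0"
    and "\<And>i. hpd (C i)"
    and "\<And>x i. x \<in> X \<Longrightarrow> hpd (B x i)"
  shows "(\<forall>x\<in>X.
            Im (gobj \<omega> C A B x) = 0 \<and>
            fq \<omega> C A B x (\<lambda>i. matrix_inv (B x i) ** A x i) = Re (gobj \<omega> C A B x) \<and>
            (\<forall>Y. fq \<omega> C A B x Y \<le> Re (gobj \<omega> C A B x)) \<and>
            (\<forall>Y. fq \<omega> C A B x Y = Re (gobj \<omega> C A B x) \<longrightarrow>
                 Y = (\<lambda>i. matrix_inv (B x i) ** A x i)))
      \<and> (SUP x\<in>X. ereal (Re (gobj \<omega> C A B x)))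
          = (SUP p\<in>X \<times> UNIV. ereal (fq \<omega> C A B (fst p) (snd p)))
      \<and> (\<forall>xs\<in>X.
            (\<forall>x\<in>X. Re (gobj \<omega> C A B x) \<le> Re (gobj \<omega> C A B xs))
            \<longleftrightarrow>
            (\<forall>x\<in>X. \<forall>Y. fq \<omega> C A B x Y
                       \<le> fq \<omega> C A B xs (\<lambda>i. matrix_inv (B xs i) ** A xs i)))"
proof -
  define Y0 where "Y0 x = (\<lambda>i. matrix_inv (B x i) ** A x i)" for x
  define Q where "Q x Y i = Re (G (B x i) (C i) (Y i - Y0 x i) (Y i - Y0 x i))" for x Y i
  have Im0: "Im (gobj \<omega> C A B x) = 0" if "x \<in> X" for x
    unfolding gobj_def Im_sum using perI(1)[OF assms(4)[OF that] assms(3)] by simp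
  have feq: "fq \<omega> C A B x Y = Re (gobj \<omega> C A B x) - (\<Sum>i\<in>UNIV. \<omega> i * Q x Y i)"
    if "x \<in> X" for x Y
  proof -
    have "fq \<omega> C A B x Y = (\<Sum>i\<in>UNIV. \<omega> i * (Re (trace (C i ** mratio (A x i) (B x i))) - Q x Y i))"
      unfolding fq_def Re_sum Q_def Y0_def
      using perI(2)[OF assms(4)[OF that] assms(3)] by simp
    also have "\<dots> = Re (gobj \<omega> C A B x) - (\<Sum>i\<in>UNIV. \<omega> i * Q x Y i)"
      unfolding gobj_def Re_sum by (simp add: right_diff_distrib sum_subtractf)
    finally show ?thesis .
  qed
  have Qge: "0 \<le> \<omega> i * Q x Y i" if "x \<in> X" for x Y i
    using tr_nonneg[OF assms(4)[OF that] assms(3)] assms(2)[of i] unfolding Q_def G_def by simp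
  have fY0: "fq \<omega> C A B x (Y0 x) = Re (gobj \<omega> C A B x)" if "x \<in> X" for x
    using feq[OF that] by (simp add: Q_def)
  have fle: "fq \<omega> C A B x Y \<le> Re (gobj \<omega> C A B x)" if "x \<in> X" for x Y
    using feq[OF that, of Y] sum_nonneg[of UNIV "\<lambda>i. \<omega> i * Q x Y i"] Qge[OF that] by simp
  have uniq: "Y = Y0 x" if "x \<in> X" "fq \<omega> C A B x Y = Re (gobj \<omega> C A B x)" for x Y
  proof
    fix i
    have "(\<Sum>i\<in>UNIV. \<omega> i * Q x Y i) = 0" using feq[OF that(1), of Y] that(2) by simp
    then have "\<omega> i * Q x Y i = 0" using sum_nonneg_eq_0_iff[of UNIV "\<lambda>i. \<omega> i * Q x Y i"] Qge[OF that(1)] by simp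
    then have q0: "Q x Y i = 0" using assms(2)[of i] by simp
    show "Y i = Y0 x i"
    proof (rule ccontr)
      assume "Y i \<noteq> Y0 x i"
      then have "Y i - Y0 x i \<noteq> 0" by simp
      from tr_pos[OF assms(4)[OF that(1), of i] assms(3)[of i] this] q0 show False
        unfolding Q_def G_def by simp
    qed
  qed
  have part1: "\<forall>x\<in>X.
            Im (gobj \<omega> C A B x) = 0 \<and>
            fq \<omega> C A B x (\<lambda>i. matrix_inv (B x i) ** A x i) = Re (gobj \<omega> C A B x) \<and>
            (\<forall>Y. fq \<omega> C A B x Y \<le> Re (gobj \<omega> C A B x)) \<and>
            (\<forall>Y. fq \<omega> C A B x Y = Re (gobj \<omega> C A B x) \<longrightarrow>
                 Y = (\<lambda>i. matrix_inv (B x i) ** A x i))"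
    using Im0 fY0 fle uniq unfolding Y0_def by blast
  have part2: "(SUP x\<in>X. ereal (Re (gobj \<omega> C A B x)))
          = (SUP p\<in>X \<times> UNIV. ereal (fq \<omega> C A B (fst p) (snd p)))"
  proof (rule antisym)
    show "(SUP x\<in>X. ereal (Re (gobj \<omega> C A B x))) \<le> (SUP p\<in>X \<times> UNIV. ereal (fq \<omega> C A B (fst p) (snd p)))"
    proof (rule SUP_least)
      fix x assume x: "x \<in> X"
      have "ereal (Re (gobj \<omega> C A B x)) = ereal (fq \<omega> C A B (fst (x, Y0 x)) (snd (x, Y0 x)))"
        using fY0[OF x] by simp
      also have "\<dots> \<le> (SUP p\<in>X \<times> UNIV. ereal (fq \<omega> C A B (fst p) (snd p)))"
        by (rule SUP_upper) (simp add: x)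
      finally show "ereal (Re (gobj \<omega> C A B x)) \<le> \<dots>" .
    qed
    show "(SUP p\<in>X \<times> UNIV. ereal (fq \<omega> C A B (fst p) (snd p))) \<le> (SUP x\<in>X. ereal (Re (gobj \<omega> C A B x)))"
    proof (rule SUP_least)
      fix p :: "'x \<times> ('n \<Rightarrow> complex^'d^'m)" assume p: "p \<in> X \<times> UNIV"
      then have px: "fst p \<in> X" by auto
      show "ereal (fq \<omega> C A B (fst p) (snd p)) \<le> (SUP x\<in>X. ereal (Re (gobj \<omega> C A B x)))"
        by (rule SUP_upper2[OF px]) (simp add: fle[OF px])
    qed
  qed
  have part3: "\<forall>xs\<in>X.
            (\<forall>x\<in>X. Re (gobj \<omega> C A B x) \<le> Re (gobj \<omega> C A B xs))
            \<longleftrightarrow>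
            (\<forall>x\<in>X. \<forall>Y. fq \<omega> C A B x Y
                       \<le> fq \<omega> C A B xs (\<lambda>i. matrix_inv (B xs i) ** A xs i))"
  proof (intro ballI iffI allI)
    fix xs x Y assume xs: "xs \<in> X" and h: "\<forall>x\<in>X. Re (gobj \<omega> C A B x) \<le> Re (gobj \<omega> C A B xs)"
      and x: "x \<in> X"
    show "fq \<omega> C A B x Y \<le> fq \<omega> C A B xs (\<lambda>i. matrix_inv (B xs i) ** A xs i)"
      using fle[OF x, of Y] h x fY0[OF xs] unfolding Y0_def by force
  next
    fix xs x assume xs: "xs \<in> X" and h: "\<forall>x\<in>X. \<forall>Y. fq \<omega> C A B x Y
                       \<le> fq \<omega> C A B xs (\<lambda>i. matrix_inv (B xs i) ** A xs i)"
      and x: "x \<in> X"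
    show "Re (gobj \<omega> C A B x) \<le> Re (gobj \<omega> C A B xs)"
      using h x fY0[OF x] fY0[OF xs] unfolding Y0_def by metis
  qed
  show ?thesis using part1 part2 part3 by blast
qed

end
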